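(* Let $n_{0},k_{0},\Delta,\delta$ be nonnegative integers and define $$C_i=\binom{n_{0}+i\Delta}{k_0+i\delta},\qquad i=0,1,2,\ldots.$$ If $\Delta>\delta>0$ and $-1\leq k_0-(n_0+1)\delta/\Delta\leq0$, then the sequence $\{C_i\}_{i\geq0}$ is infinitely log-monotonic.
   Context: For a sequence $\{z_n\}$ of positive numbers, define the operator $R\{z_n\}=\{z_{n+1}/z_n\}$. A sequence of positive numbers $\{x_n\}$ is log-convex if $x_{n-1}x_{n+1}\ge x_n^2$ and log-concave if $x_{n-1}x_{n+1}\le x_n^2$, for all indices where these terms are defined. A sequence $\{z_n\}$ is log-monotonic of order $k$ if for every odd $r\le k-1$ the sequence $R^r\{z_n\}$ is log-concave and for every even $r\le k-1$ (including $r=0$) the sequence $R^r\{z_n\}$ is log-convex. It is infinitely log-monotonic if it is log-monotonic of order $k$ for every integer $k\ge0$. *)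

theory Defs
  imports Complex_Main
begin

definition ratio_seq :: "(nat \<Rightarrow> real) \<Rightarrow> (nat \<Rightarrow> real)" where
  "ratio_seq z = (\<lambda>n. z (Suc n) / z n)"

definition log_convex_seq :: "(nat \<Rightarrow> real) \<Rightarrow> bool" where
  "log_convex_seq x \<longleftrightarrow> (\<forall>n. x n * x (n + 2) \<ge> (x (n + 1))\<^sup>2)"

definition log_concave_seq :: "(nat \<Rightarrow> real) \<Rightarrow> bool" where
  "log_concave_seq x \<longleftrightarrow> (\<forall>n. x n * x (n + 2) \<le> (x (n + 1))\<^sup>2)"

definition log_monotonic_order :: "nat \<Rightarrow> (nat \<Rightarrow> real) \<Rightarrow> bool" where
  "log_monotonic_order k z \<longleftrightarrow>
     (\<forall>n. z n > 0) \<and>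
     (\<forall>r<k. (odd r \<longrightarrow> log_concave_seq ((ratio_seq ^^ r) z)) \<and>
             (even r \<longrightarrow> log_convex_seq ((ratio_seq ^^ r) z)))"

definition infinitely_log_monotonic :: "(nat \<Rightarrow> real) \<Rightarrow> bool" where
  "infinitely_log_monotonic z \<longleftrightarrow> (\<forall>k. log_monotonic_order k z)"

end

theory Submission imports Defs "HOL-Library.Multiset" begin


definition dd :: "(real \<Rightarrow> real) \<Rightarrow> real \<Rightarrow> real" where
  "dd f x = f (x + 1) - f x"

definition fdiff :: "(nat \<Rightarrow> real) \<Rightarrow> nat \<Rightarrow> real" where
  "fdiff f n = f (Suc n) - f n"

lemma dd_Suc: "dd ((dd ^^ r) f) x = (dd ^^ r) f (x + 1) - (dd ^^ r) f x"
  by (simp only: dd_def)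

lemma fdiff_Suc: "fdiff ((fdiff ^^ r) f) n = (fdiff ^^ r) f (Suc n) - (fdiff ^^ r) f n"
  by (simp only: fdiff_def)

definition PP :: "nat \<Rightarrow> real \<Rightarrow> real" where
  "PP r x = (\<Prod>k\<le>r. (x + real k))"

lemma PP_pos: "x > 0 \<Longrightarrow> PP r x > 0"
  unfolding PP_def by (intro prod_pos) auto

lemma PP_Suc1: "PP (Suc r) x = PP r x * (x + real (Suc r))"
  unfolding PP_def by (simp add: prod.atMost_Suc)

lemma PP_Suc2: "PP (Suc r) x = x * PP r (x + 1)"
  unfolding PP_def by (subst prod.atMost_Suc_shift) (simp add: ac_simps)

lemma dd_inv: "x > 0 \<Longrightarrow> (dd ^^ r) (\<lambda>x. 1 / x) x = (-1) ^ r * fact r / PP r x"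
proof (induction r arbitrary: x)
  case 0 then show ?case by (simp add: PP_def)
next
  case (Suc r)
  have p1: "PP r (x+1) > 0" "PP r x > 0" using Suc.prems by (auto intro: PP_pos)
  have "(dd ^^ Suc r) (\<lambda>x. 1 / x) x = (-1) ^ r * fact r / PP r (x+1) - (-1) ^ r * fact r / PP r x"
    using Suc.IH[of "x+1"] Suc.IH[of x] Suc.prems by (simp add: dd_Suc)
  also have "\<dots> = (-1) ^ r * fact r * ((PP r x - PP r (x+1)) / (PP r x * PP r (x+1)))"
    using p1 by (simp add: field_simps)
  also have "PP r x * PP r (x+1) * x = PP (Suc r) x * PP r x"
    by (simp add: PP_Suc2)
  hence "PP r x - PP r (x+1) = PP r x * PP r (x+1) * (-(real (Suc r))) / PP (Suc r) x"
  proof -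
    have e1: "PP (Suc r) x = x * PP r (x+1)" by (rule PP_Suc2)
    have e2: "PP (Suc r) x = PP r x * (x + real (Suc r))" by (rule PP_Suc1)
    have "PP r x * x - PP r (x+1) * x = PP r x * x - PP r x * (x + real (Suc r))"
      using e1 e2 by (simp add: algebra_simps)
    hence "(PP r x - PP r (x+1)) * x = PP r x * (-(real (Suc r)))" by (simp add: algebra_simps)
    hence "PP r x - PP r (x+1) = PP r x * (-(real (Suc r))) / x" using Suc.prems by (simp add: field_simps)
    also have "\<dots> = PP r x * PP r (x+1) * (-(real (Suc r))) / (x * PP r (x+1))" using p1 by simp
    finally show ?thesis using e1 by simp
  qed
  also have "(-1) ^ r * fact r * (PP r x * PP r (x+1) * (-(real (Suc r))) / PP (Suc r) x / (PP r x * PP r (x+1)))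
      = (-1) ^ Suc r * fact (Suc r) / PP (Suc r) x"
    using p1 PP_pos[OF Suc.prems, of "Suc r"] by (simp add: field_simps)
  finally show ?case .
qed

lemma deriv_ddln:
  assumes "x > 0"
  shows "((dd ^^ r) ln has_real_derivative (dd ^^ r) (\<lambda>x. 1 / x) x) (at x)"
  using assms
proof (induction r arbitrary: x)
  case 0 then show ?case by (auto intro!: derivative_eq_intros)
next
  case (Suc r)
  have a: "((\<lambda>y. (dd ^^ r) ln (y + 1)) has_real_derivative (dd ^^ r) (\<lambda>x. 1 / x) (x+1)) (at x)"
    using Suc.IH[of "x+1"] Suc.prems DERIV_shift by auto
  have b: "((dd ^^ r) ln has_real_derivative (dd ^^ r) (\<lambda>x. 1 / x) x) (at x)"
    using Suc.IH[of x] Suc.prems by auto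
  have "((\<lambda>y. (dd ^^ r) ln (y + 1) - (dd ^^ r) ln y) has_real_derivative
        (dd ^^ r) (\<lambda>x. 1 / x) (x+1) - (dd ^^ r) (\<lambda>x. 1 / x) x) (at x)"
    by (rule DERIV_diff[OF a b])
  thus ?case by (simp add: dd_Suc)
qed

lemma F_antimono:
  assumes "0 < a" "a \<le> b" "y \<ge> 0"
  shows "(-1)^r * (dd ^^ Suc r) ln (y + b) \<le> (-1)^r * (dd ^^ Suc r) ln (y + a)"
proof -
  let ?g = "\<lambda>s. (-1)^r * (dd ^^ Suc r) ln (y + s)"
  let ?g' = "\<lambda>s. (-1)^r * (dd ^^ Suc r) (\<lambda>x. 1/x) (y + s)"
  have D: "(?g has_real_derivative ?g' s) (at s)" if s: "s \<in> {a..b}" for s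
  proof -
    have sp: "s + y > 0" using assms s by auto
    have "((dd ^^ Suc r) ln has_real_derivative (dd ^^ Suc r) (\<lambda>x. 1 / x) (s + y)) (at (s + y))"
      by (rule deriv_ddln[OF sp])
    hence "((\<lambda>s. (dd ^^ Suc r) ln (s + y)) has_real_derivative (dd ^^ Suc r) (\<lambda>x. 1 / x) (s + y)) (at s)"
      using DERIV_shift by blast
    hence "((\<lambda>s. (-1)^r * (dd ^^ Suc r) ln (s + y)) has_real_derivative (-1)^r * (dd ^^ Suc r) (\<lambda>x. 1 / x) (s + y)) (at s)"
      by (rule DERIV_cmult)
    thus ?thesis by (simp add: add.commute)
  qed
  have N: "?g' s \<le> 0" if s: "s \<in> {a..b}" for s
  proof -
    have sp: "y + s > 0" using assms s by auto
    have "?g' s = (-1)^r * ((-1) ^ Suc r * fact (Suc r) / PP (Suc r) (y+s))"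
      using dd_inv[OF sp, of "Suc r"] by simp
    also have "\<dots> = - (fact (Suc r) / PP (Suc r) (y+s))" by simp
    also have "\<dots> \<le> 0" using PP_pos[OF sp, of "Suc r"] by simp
    finally show ?thesis .
  qed
  have "?g b \<le> ?g a"
    by (rule deriv_nonpos_imp_antimono[where g' = ?g', OF D N assms(2)])
  thus ?thesis by simp
qed



lemma dom_sum:
  fixes A B :: "real multiset" and F :: "real \<Rightarrow> real"
  assumes "size A = size B"
    and "\<And>t. size (filter_mset (\<lambda>x. x \<le> t) B) \<le> size (filter_mset (\<lambda>x. x \<le> t) A)"
    and "\<And>x. x \<in># A + B \<Longrightarrow> x \<in> S"
    and "\<And>x y. x \<in> S \<Longrightarrow> y \<in> S \<Longrightarrow> x \<le> y \<Longrightarrow> F y \<le> F x"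
  shows "sum_mset (image_mset F B) \<le> sum_mset (image_mset F A)"
  using assms
proof (induction "size A" arbitrary: A B)
  case 0 then show ?case by auto
next
  case (Suc m)
  have Ane: "A \<noteq> {#}" using Suc.hyps(2) by auto
  have Bne: "B \<noteq> {#}" using Suc.hyps(2) Suc.prems(1) by auto
  define a where "a = Max (set_mset A)"
  define b where "b = Max (set_mset B)"
  have aA: "a \<in># A" using Ane unfolding a_def by (auto intro: Max_in)
  have bB: "b \<in># B" using Bne unfolding b_def by (auto intro: Max_in)
  have leb: "\<And>x. x \<in># B \<Longrightarrow> x \<le> b" unfolding b_def by auto
  have lea: "\<And>x. x \<in># A \<Longrightarrow> x \<le> a" unfolding a_def by auto
  have "filter_mset (\<lambda>x. x \<le> b) B = B" using leb by (auto intro: filter_mset_eq_conv[THEN iffD2])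
  hence "size A \<le> size (filter_mset (\<lambda>x. x \<le> b) A)" using Suc.prems(1) Suc.prems(2)[of b] by simp
  hence "filter_mset (\<lambda>x. x \<le> b) A = A"
    by (metis mset_subset_size multiset_filter_subset not_less subset_mset.le_imp_less_or_eq)
  hence ab: "a \<le> b" using aA by (metis mem_Collect_eq set_mset_filter)
  define A' where "A' = A - {#a#}"
  define B' where "B' = B - {#b#}"
  have A: "A = add_mset a A'" using aA unfolding A'_def by simp
  have B: "B = add_mset b B'" using bB unfolding B'_def by simp
  have IH: "sum_mset (image_mset F B') \<le> sum_mset (image_mset F A')"
  proof (rule Suc.hyps(1))
    show "m = size A'" using Suc.hyps(2) A by (metis size_add_mset nat.inject)
    show "size A' = size B'" using Suc.prems(1) A B by (metis size_add_mset nat.inject)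
    show "x \<in> S" if "x \<in># A' + B'" for x using Suc.prems(3)[of x] that A B by auto
    show "F y \<le> F x" if "x \<in> S" "y \<in> S" "x \<le> y" for x y using Suc.prems(4) that by blast
    fix t
    show "size (filter_mset (\<lambda>x. x \<le> t) B') \<le> size (filter_mset (\<lambda>x. x \<le> t) A')"
    proof (cases "t < a")
      case True
      have "size (filter_mset (\<lambda>x. x \<le> t) B') \<le> size (filter_mset (\<lambda>x. x \<le> t) B)"
        using B by auto
      also have "\<dots> \<le> size (filter_mset (\<lambda>x. x \<le> t) A)" by (rule Suc.prems(2))
      also have "\<dots> = size (filter_mset (\<lambda>x. x \<le> t) A')" using A True by auto
      finally show ?thesis .
    next
      case False
      have "filter_mset (\<lambda>x. x \<le> t) A' = A'"
        using lea False A by (auto intro!: filter_mset_eq_conv[THEN iffD2]) (meson not_less order.trans)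
      hence "size (filter_mset (\<lambda>x. x \<le> t) A') = size B'"
        using Suc.prems(1) A B by simp
      thus ?thesis by (metis size_filter_mset_lesseq)
    qed
  qed
  have "F b \<le> F a" using Suc.prems(4) Suc.prems(3) aA bB ab by auto
  thus ?case using IH A B by simp
qed

lemma count_floor:
  fixes N D :: nat and t :: real
  assumes "D > 0"
  shows "size (filter_mset (\<lambda>x. x \<le> t) (image_mset (\<lambda>j. real (N + j + 1) / real D) (mset_set {..<D})))
       = nat (min (int D) (\<lfloor>t * real D\<rfloor> - int N))"
proof -
  have "filter_mset (\<lambda>x. x \<le> t) (image_mset (\<lambda>j. real (N + j + 1) / real D) (mset_set {..<D}))
      = image_mset (\<lambda>j. real (N + j + 1) / real D) (mset_set {j\<in>{..<D}. real (N + j + 1) / real D \<le> t})"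
    by (simp add: filter_mset_image_mset filter_mset_mset_set)
  moreover have "{j\<in>{..<D}. real (N + j + 1) / real D \<le> t} = {..< nat (min (int D) (\<lfloor>t * real D\<rfloor> - int N))}"
  proof -
    have "real (N + j + 1) / real D \<le> t \<longleftrightarrow> int (N + j + 1) \<le> \<lfloor>t * real D\<rfloor>" for j
      using assms by (simp add: divide_le_eq le_floor_iff mult.commute)
    moreover have "j < D \<and> int (N + j + 1) \<le> \<lfloor>t * real D\<rfloor> \<longleftrightarrow> j < nat (min (int D) (\<lfloor>t * real D\<rfloor> - int N))" for j
      by linarith
    ultimately show ?thesis by blast
  qed
  ultimately show ?thesis by simp
qed



lemma ratio_pow:
  assumes "\<And>n. z n > 0"
  shows "(\<forall>n. (ratio_seq^^r) z n > 0) \<and> (\<forall>n. ln ((ratio_seq^^r) z n) = (fdiff^^r) (\<lambda>n. ln (z n)) n)"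
proof (induction r)
  case 0 then show ?case using assms by simp
next
  case (Suc r)
  have "(ratio_seq^^Suc r) z n = (ratio_seq^^r) z (Suc n) / (ratio_seq^^r) z n" for n
    by (simp only: funpow.simps o_apply ratio_seq_def)
  moreover have "(fdiff^^Suc r) (\<lambda>n. ln (z n)) n = (fdiff^^r) (\<lambda>n. ln (z n)) (Suc n) - (fdiff^^r) (\<lambda>n. ln (z n)) n" for n
    by (simp add: fdiff_Suc)
  ultimately show ?case using Suc by (auto simp: ln_div simp del: funpow.simps) (metis less_irrefl)+
qed

lemma fdiff_diff: "(fdiff^^r) (\<lambda>i. u i - v i) n = (fdiff^^r) u n - (fdiff^^r) v n"
  by (induction r arbitrary: n) (auto simp: fdiff_Suc)

lemma fdiff_sum:
  "(fdiff^^r) (\<lambda>i. \<Sum>j\<in>S. f (real i + a j)) n = (\<Sum>j\<in>S. (dd^^r) f (real n + a j))"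
proof (induction r arbitrary: n)
  case 0 then show ?case by simp
next
  case (Suc r)
  show ?case using Suc.IH by (simp add: fdiff_Suc dd_Suc sum_subtractf algebra_simps)
qed

lemma fact_add_prod: "(fact (N + m) :: real) = fact N * (\<Prod>j<m. real (N + j + 1))"
  by (induction m) (auto simp: prod.lessThan_Suc algebra_simps)

lemma lnstep:
  assumes "D > 0"
  shows "ln (real (N0 + Suc i * D + j + 1)) - ln (real (N0 + i * D + j + 1))
       = dd ln (real i + real (N0 + j + 1) / real D)"
proof -
  have e1: "real (N0 + i * D + j + 1) = real D * (real i + real (N0 + j + 1) / real D)"
    using assms by (simp add: field_simps)
  have e2: "real (N0 + Suc i * D + j + 1) = real D * (real i + real (N0 + j + 1) / real D + 1)"
    using assms by (simp add: field_simps)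
  have p: "real i + real (N0 + j + 1) / real D > 0" using assms by (simp add: add_nonneg_pos)
  show ?thesis unfolding dd_def e1 e2 using assms p
    by (simp add: ln_mult)
qed

lemma blockstep:
  assumes "D > 0"
  shows "(\<Sum>j<D. ln (real (N0 + Suc i * D + j + 1))) - (\<Sum>j<D. ln (real (N0 + i * D + j + 1)))
       = (\<Sum>j<D. dd ln (real i + real (N0 + j + 1) / real D))"
  using lnstep[OF assms] by (simp add: sum_subtractf[symmetric])

lemma int_ineq:
  fixes t :: real and d e D k0 c n0 :: nat
  assumes "d > 0" "e > 0" "D = d + e" "n0 = k0 + c" "k0 * e \<le> (c + 1) * d" "c * d \<le> (k0 + 1) * e"
  shows "nat (min (int d) (\<lfloor>t * real d\<rfloor> - int k0)) + nat (min (int e) (\<lfloor>t * real e\<rfloor> - int c))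
       \<le> nat (min (int D) (\<lfloor>t * real D\<rfloor> - int n0))"
proof -
  define p where "p = \<lfloor>t * real d\<rfloor>"
  define q where "q = \<lfloor>t * real e\<rfloor>"
  define s where "s = \<lfloor>t * real D\<rfloor>"
  have "t * real D = t * real d + t * real e" using assms(3) by (simp add: algebra_simps)
  hence sp: "p + q \<le> s" unfolding p_def q_def s_def by (metis le_floor_add)
  have h1: "p \<ge> int k0" if "q \<ge> int c + 1"
  proof -
    have "real c + 1 \<le> t * real e" using that of_int_floor_le[of "t * real e"] unfolding q_def
      by (metis (mono_tags, opaque_lifting) of_int_1 of_int_add of_int_le_iff of_int_of_nat_eq order_trans)
    hence "(real c + 1) * real d \<le> t * real e * real d" using assms(1) by (simp add: mult_right_mono)
    moreover have "real k0 * real e \<le> (real c + 1) * real d"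
      using assms(5) by (metis of_nat_1 of_nat_add of_nat_le_iff of_nat_mult)
    ultimately have "real k0 * real e \<le> (t * real d) * real e" by (simp add: algebra_simps)
    hence "real k0 \<le> t * real d" using assms(2) by simp
    thus ?thesis unfolding p_def by (simp add: le_floor_iff)
  qed
  have h2: "q \<ge> int c" if "p \<ge> int k0 + 1"
  proof -
    have "real k0 + 1 \<le> t * real d" using that of_int_floor_le[of "t * real d"] unfolding p_def
      by (metis (mono_tags, opaque_lifting) of_int_1 of_int_add of_int_le_iff of_int_of_nat_eq order_trans)
    hence "(real k0 + 1) * real e \<le> t * real d * real e" using assms(2) by (simp add: mult_right_mono)
    moreover have "real c * real d \<le> (real k0 + 1) * real e"
      using assms(6) by (metis of_nat_1 of_nat_add of_nat_le_iff of_nat_mult)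
    ultimately have "real c * real d \<le> (t * real e) * real d" by (simp add: algebra_simps)
    hence "real c \<le> t * real e" using assms(1) by simp
    thus ?thesis unfolding q_def by (simp add: le_floor_iff)
  qed
  show ?thesis unfolding p_def[symmetric] q_def[symmetric] s_def[symmetric]
    using sp h1 h2 assms(3,4) by linarith
qed



lemma log_ineq:
  fixes x :: "nat \<Rightarrow> real" and H :: "nat \<Rightarrow> real"
  assumes "\<And>n. x n > 0" "\<And>n. ln (x n) = H n"
  shows "x n * x (n+2) \<ge> (x (n+1))\<^sup>2 \<longleftrightarrow> fdiff (fdiff H) n \<ge> 0"
    and "x n * x (n+2) \<le> (x (n+1))\<^sup>2 \<longleftrightarrow> fdiff (fdiff H) n \<le> 0"
proof -
  have q: "x n > 0" "x (n+1) > 0" "x (n+2) > 0" using assms(1) by blast+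
  have p1: "x n * x (n+2) > 0" "(x (n+1))\<^sup>2 > 0" using q by auto
  have l1: "ln (x n * x (n+2)) = H n + H (n+2)" using q assms(2) by (simp add: ln_mult)
  have l2: "ln ((x (n+1))\<^sup>2) = 2 * H (n+1)" using q assms(2) by (simp add: power2_eq_square ln_mult)
  have f: "fdiff (fdiff H) n = H n + H (n+2) - 2 * H (n+1)" by (simp add: fdiff_def)
  show "x n * x (n+2) \<ge> (x (n+1))\<^sup>2 \<longleftrightarrow> fdiff (fdiff H) n \<ge> 0"
    using ln_le_cancel_iff[OF p1(2) p1(1)] l1 l2 f by linarith
  show "x n * x (n+2) \<le> (x (n+1))\<^sup>2 \<longleftrightarrow> fdiff (fdiff H) n \<le> 0"
    using ln_le_cancel_iff[OF p1(1) p1(2)] l1 l2 f by linarith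
qed

definition QQ :: "nat \<Rightarrow> nat \<Rightarrow> nat \<Rightarrow> real" where
  "QQ N0 X i = (\<Prod>j<X. real (N0 + i * X + j + 1))"

definition TT :: "nat \<Rightarrow> nat \<Rightarrow> nat \<Rightarrow> real" where
  "TT N0 X i = (\<Sum>j<X. dd ln (real i + real (N0 + j + 1) / real X))"

lemma pos1: "real (m + 1) > 0" by simp

lemma QQ_pos: "QQ N0 X i > 0" unfolding QQ_def by (intro prod_pos) (rule pos1)

lemma fact_QQ: "(fact (N0 + Suc i * X) :: real) = fact (N0 + i * X) * QQ N0 X i"
proof -
  have "N0 + Suc i * X = (N0 + i * X) + X" by simp
  thus ?thesis unfolding QQ_def by (simp only: fact_add_prod)
qed

lemma ln_QQ: "ln (QQ N0 X i) = (\<Sum>j<X. ln (real (N0 + i * X + j + 1)))"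
  unfolding QQ_def by (rule ln_prod) (simp, metis pos1 less_irrefl)

lemma ln_QQ_step: "X > 0 \<Longrightarrow> ln (QQ N0 X (Suc i)) - ln (QQ N0 X i) = TT N0 X i"
  unfolding ln_QQ TT_def using blockstep by simp

lemma fdiff_TT: "(fdiff ^^ r) (TT N0 X) n = (\<Sum>j<X. (dd ^^ Suc r) ln (real n + real (N0 + j + 1) / real X))"
proof -
  have "(fdiff ^^ r) (TT N0 X) n = (\<Sum>j<X. (dd ^^ r) (dd ln) (real n + real (N0 + j + 1) / real X))"
    unfolding TT_def by (rule fdiff_sum)
  also have "\<dots> = (\<Sum>j<X. (dd ^^ Suc r) ln (real n + real (N0 + j + 1) / real X))"
    by (simp add: funpow_swap1)
  finally show ?thesis .
qed

lemma msum: "(\<Sum>j<X. F (a j)) = sum_mset (image_mset F (image_mset a (mset_set {..<X})))"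
  by (simp add: sum_unfold_sum_mset multiset.map_comp o_def)



theorem corollary3p3:
  fixes n0 k0 \<Delta> \<delta> :: nat
  assumes "\<Delta> > \<delta>" and "\<delta> > 0"
    and "-1 \<le> real k0 - (real n0 + 1) * real \<delta> / real \<Delta>"
    and "real k0 - (real n0 + 1) * real \<delta> / real \<Delta> \<le> 0"
  shows "infinitely_log_monotonic (\<lambda>i. real ((n0 + i * \<Delta>) choose (k0 + i * \<delta>)))"
proof -
  define d where "d = \<delta>"
  define D where "D = \<Delta>"
  define e where "e = \<Delta> - \<delta>"
  have dpos: "d > 0" and epos: "e > 0" and Dpos: "D > 0" and De: "D = d + e"
    using assms(1,2) unfolding d_def e_def D_def by auto
  have Dr: "real D > 0" using Dpos by simp
  have up: "real k0 * real D \<le> (real n0 + 1) * real d"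
    using assms(4) Dr unfolding d_def D_def by (simp add: field_simps)
  have lo: "(real n0 + 1) * real d \<le> (real k0 + 1) * real D"
    using assms(3) Dr unfolding d_def D_def by (simp add: field_simps)
  have upn: "k0 * D \<le> (n0 + 1) * d" using up by (metis of_nat_1 of_nat_add of_nat_le_iff of_nat_mult)
  have lon: "(n0 + 1) * d \<le> (k0 + 1) * D" using lo by (metis of_nat_1 of_nat_add of_nat_le_iff of_nat_mult)
  have "k0 * D < (n0 + 1) * D" using upn De epos by (metis add_less_same_cancel1 le_less_trans mult_less_cancel1 less_add_same_cancel1 zero_less_Suc add.commute Suc_eq_plus1 nat_mult_less_cancel_disj)
  hence "k0 < n0 + 1" by (metis mult_less_cancel2)
  hence k0n0: "k0 \<le> n0" by simp
  define c where "c = n0 - k0"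
  have n0c: "n0 = k0 + c" using k0n0 unfolding c_def by simp
  have h5: "k0 * e \<le> (c + 1) * d" using upn unfolding De n0c by (simp add: algebra_simps)
  have h6: "c * d \<le> (k0 + 1) * e" using lon unfolding De n0c by (simp add: algebra_simps)
  define z where "z = (\<lambda>i. real ((n0 + i * \<Delta>) choose (k0 + i * \<delta>)))"
  have zf: "z i = fact (n0 + i * D) / (fact (k0 + i * d) * fact (c + i * e))" for i
  proof -
    have "k0 + i * d \<le> n0 + i * D" "n0 + i * D - (k0 + i * d) = c + i * e"
      unfolding n0c De by (auto simp: algebra_simps)
    thus ?thesis unfolding z_def d_def D_def by (simp add: binomial_fact)
  qed
  have zpos: "z i > 0" for i unfolding zf by simp
  define L where "L = (\<lambda>i. ln (z i))"
  have zstep: "z (Suc i) = z i * (QQ n0 D i / (QQ k0 d i * QQ c e i))" for i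
    unfolding zf fact_QQ using QQ_pos[of k0 d i] QQ_pos[of c e i] by (simp add: field_simps)
  have G: "L (Suc i) - L i = ln (QQ n0 D i) - ln (QQ k0 d i) - ln (QQ c e i)" for i
    unfolding L_def zstep using zpos[of i] QQ_pos[of n0 D i] QQ_pos[of k0 d i] QQ_pos[of c e i]
    by (simp add: ln_mult ln_div)
  define gg where "gg = fdiff (fdiff L)"
  have gg: "gg = (\<lambda>i. TT n0 D i - TT k0 d i - TT c e i)"
  proof
    fix i
    have "gg i = (L (Suc (Suc i)) - L (Suc i)) - (L (Suc i) - L i)" unfolding gg_def fdiff_def by simp
    also have "\<dots> = (ln (QQ n0 D (Suc i)) - ln (QQ n0 D i)) - (ln (QQ k0 d (Suc i)) - ln (QQ k0 d i))
         - (ln (QQ c e (Suc i)) - ln (QQ c e i))" unfolding G by simp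
    also have "\<dots> = TT n0 D i - TT k0 d i - TT c e i"
      using ln_QQ_step[OF Dpos] ln_QQ_step[OF dpos] ln_QQ_step[OF epos] by simp
    finally show "gg i = TT n0 D i - TT k0 d i - TT c e i" .
  qed
  have KEY: "0 \<le> (-1)^r * (fdiff^^r) gg n" for r n
  proof -
    define F where "F = (\<lambda>x. (-1)^r * (dd ^^ Suc r) ln (real n + x))"
    define aD where "aD = (\<lambda>j. real (n0 + j + 1) / real D)"
    define ad where "ad = (\<lambda>j. real (k0 + j + 1) / real d)"
    define ae where "ae = (\<lambda>j. real (c + j + 1) / real e)"
    define A where "A = image_mset aD (mset_set {..<D})"
    define B where "B = image_mset ad (mset_set {..<d}) + image_mset ae (mset_set {..<e})"
    have "(-1)^r * (fdiff^^r) gg n = (\<Sum>j<D. F (aD j)) - (\<Sum>j<d. F (ad j)) - (\<Sum>j<e. F (ae j))"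
      unfolding gg fdiff_diff fdiff_TT F_def aD_def ad_def ae_def
      by (simp add: sum_distrib_left right_diff_distrib)
    also have "\<dots> = sum_mset (image_mset F A) - sum_mset (image_mset F B)"
      unfolding A_def B_def msum by simp
    finally have eq: "(-1)^r * (fdiff^^r) gg n = sum_mset (image_mset F A) - sum_mset (image_mset F B)" .
    have "sum_mset (image_mset F B) \<le> sum_mset (image_mset F A)"
    proof (rule dom_sum[where S = "{0<..}"])
      show "size A = size B" unfolding A_def B_def De by simp
      fix t :: real
      have "size (filter_mset (\<lambda>x. x \<le> t) B)
          = nat (min (int d) (\<lfloor>t * real d\<rfloor> - int k0)) + nat (min (int e) (\<lfloor>t * real e\<rfloor> - int c))"
        unfolding B_def ad_def ae_def using count_floor[OF dpos, of t k0] count_floor[OF epos, of t c]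
        by simp
      also have "\<dots> \<le> nat (min (int D) (\<lfloor>t * real D\<rfloor> - int n0))"
        by (rule int_ineq[OF dpos epos De n0c h5 h6])
      also have "\<dots> = size (filter_mset (\<lambda>x. x \<le> t) A)"
        unfolding A_def aD_def using count_floor[OF Dpos, of t n0] by simp
      finally show "size (filter_mset (\<lambda>x. x \<le> t) B) \<le> size (filter_mset (\<lambda>x. x \<le> t) A)" .
    next
      fix x assume "x \<in># A + B"
      thus "x \<in> {0<..}" unfolding A_def B_def aD_def ad_def ae_def using Dpos dpos epos
        by (auto intro!: divide_pos_pos)
    next
      fix x y :: real assume "x \<in> {0<..}" "y \<in> {0<..}" "x \<le> y"
      thus "F y \<le> F x" unfolding F_def using F_antimono[of x y "real n" r] by simp
    qed
    thus ?thesis using eq by simp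
  qed
  show ?thesis
    unfolding infinitely_log_monotonic_def log_monotonic_order_def z_def[symmetric]
  proof (intro allI conjI impI)
    fix n show "z n > 0" by (rule zpos)
  next
    fix k r :: nat assume "r < k"
    have rp: "\<And>n. (ratio_seq^^r) z n > 0" and rl: "\<And>n. ln ((ratio_seq^^r) z n) = (fdiff^^r) L n"
      using ratio_pow[of z r] zpos unfolding L_def by auto
    have sw: "fdiff (fdiff ((fdiff^^r) L)) = (fdiff^^r) gg"
      unfolding gg_def by (simp add: funpow_swap1)
    {
      assume "odd r"
      show "log_concave_seq ((ratio_seq^^r) z)"
        unfolding log_concave_seq_def
      proof
        fix n
        have "(-1::real)^r = -1" using \<open>odd r\<close> by simp
        hence "(fdiff^^r) gg n \<le> 0" using KEY[of r n] by simp
        thus "(ratio_seq ^^ r) z n * (ratio_seq ^^ r) z (n + 2) \<le> ((ratio_seq ^^ r) z (n + 1))\<^sup>2"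
          using log_ineq(2)[where x="(ratio_seq^^r) z" and H="(fdiff^^r) L" and n=n, OF rp rl] sw by simp
      qed
    }
    {
      assume "even r"
      show "log_convex_seq ((ratio_seq^^r) z)"
        unfolding log_convex_seq_def
      proof
        fix n
        have "(-1::real)^r = 1" using \<open>even r\<close> by simp
        hence "(fdiff^^r) gg n \<ge> 0" using KEY[of r n] by simp
        thus "(ratio_seq ^^ r) z n * (ratio_seq ^^ r) z (n + 2) \<ge> ((ratio_seq ^^ r) z (n + 1))\<^sup>2"
          using log_ineq(1)[where x="(ratio_seq^^r) z" and H="(fdiff^^r) L" and n=n, OF rp rl] sw by simp
      qed
    }
  qed
qed


end
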